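(* Let $n\ge 1$, let $A^*\in\mathbb{R}^{n\times n}$ and $b^*\in\mathbb{R}^n$, and consider the closed-loop affine system $\dot{x}=A^*x+b^*$ on $\mathbb{R}^n$. (This is the system $\dot{x}_m=A_mx_m+B_mu_m$ under an affine feedback with $B_mu_m=B_{m1}x_m+B_{m2}$, so that $A^*=A_m+B_{m1}$ and $b^*=B_{m2}$.) Let $R_k=\{x\in\mathbb{R}^n: a^k_j\le x_j\le b^k_j \text{ for all } j=1,\dots,n\}$ with $a^k_j<b^k_j$ for all $j$, and fix a transition direction $i\in\{1,\dots,n\}$. Let $e_{kl}=\{x\in R_k: x_i=b^k_i\}$ be the facet of $R_k$ shared with the neighbouring rectangle $R_l$, and $\overline{e_{kl}}=\{x\in R_k: x_i=a^k_i\}$ the opposite facet. Define $$C^*=\sum_{j=1,\,j\neq i}^{n}\min_{a^k_j\le y_j\le b^k_j}\big(A^*_{ij}\,y_j\big),\qquad\text{i.e. the $j$-th term is } A^*_{ij}a^k_j \text{ if } A^*_{ij}>0,\ A^*_{ij}b^k_j \text{ if } A^*_{ij}<0,\ 0 \text{ if } A^*_{ij}=0,$$ and set $x^0=a^k_i$, $x^1=b^k_i$. Assume $A^*_{ii}\neq 0$ and $A^*_{ii}y+C^*+b^*_i>0$ for all $y\in[x^0,x^1]$. Let $x(\cdot)$ be the solution with $x(0)\in\overline{e_{kl}}$, and assume that $e_{kl}$ is reached without leaving $R_k$ in the following sense: for every $t\ge 0$ such that $x_i(s)<b^k_i$ for all $s\in[0,t]$, one has $x(t)\in R_k$. Then there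 exists $t_1$ with $$0\le t_1\le T^{max}:=\frac{1}{A^*_{ii}}\ln\!\left(\frac{A^*_{ii}x^1+C^*+b^*_i}{A^*_{ii}x^0+C^*+b^*_i}\right)$$ such that $x_i(t_1)=b^k_i$, i.e. the trajectory reaches the facet $e_{kl}$ (transition $R_k\to R_l$) within time $T^{max}$.
   Context: $A^*_{ij}$ denotes the $(i,j)$ entry of $A^*$ and $b^*_i$, $x_i$ the $i$-th entries of the vectors $b^*$, $x$. The rectangles $R_k$ are cells of a partition of the workspace used to abstract an agent's motion into a weighted transition system; $T^{max}$ is used as the weight (maximum transition time) of the transition $R_k\to R_l$ across their common facet in the positive direction of coordinate $i$. *)

theory Defs
  imports "HOL-Analysis.Analysis"
begin

definition rect :: "real^'n \<Rightarrow> real^'n \<Rightarrow> (real^'n) set" where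
  "rect ak bk = {x. \<forall>j. ak $ j \<le> x $ j \<and> x $ j \<le> bk $ j}"

definition Cterm :: "real \<Rightarrow> real \<Rightarrow> real \<Rightarrow> real" where
  "Cterm c lo hi = (if c > 0 then c * lo else if c < 0 then c * hi else 0)"

definition C_star :: "real^'n^'n \<Rightarrow> real^'n \<Rightarrow> real^'n \<Rightarrow> 'n \<Rightarrow> real" where
  "C_star A ak bk i = (\<Sum>j\<in>UNIV - {i}. Cterm (A $ i $ j) (ak $ j) (bk $ j))"

definition T_max :: "real^'n^'n \<Rightarrow> real^'n \<Rightarrow> real^'n \<Rightarrow> real^'n \<Rightarrow> 'n \<Rightarrow> real" where
  "T_max A b ak bk i =
     (1 / A $ i $ i) * ln ((A $ i $ i * bk $ i + C_star A ak bk i + b $ i) /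
                           (A $ i $ i * ak $ i + C_star A ak bk i + b $ i))"

end

theory Submission
  imports Defs
begin

theorem theorem1:
  fixes A :: "real^'n^'n" and b :: "real^'n"
    and ak bk :: "real^'n" and i :: 'n
    and x :: "real \<Rightarrow> real^'n"
  assumes rect_nondeg: "\<forall>j. ak $ j < bk $ j"
    and Aii: "A $ i $ i \<noteq> 0"
    and pos: "\<forall>y\<in>{ak $ i .. bk $ i}. A $ i $ i * y + C_star A ak bk i + b $ i > 0"
    and ode: "\<forall>t\<ge>0. (x has_vector_derivative (A *v x t + b)) (at t within {0..})"
    and init: "x 0 \<in> rect ak bk" "x 0 $ i = ak $ i"
    and stay: "\<forall>t\<ge>0. (\<forall>s\<in>{0..t}. x s $ i < bk $ i) \<longrightarrow> x t \<in> rect ak bk"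
  shows "\<exists>t1. 0 \<le> t1 \<and> t1 \<le> T_max A b ak bk i \<and> x t1 $ i = bk $ i"
proof -
  define a where "a = A $ i $ i"
  define c where "c = C_star A ak bk i + b $ i"
  define g where "g y = a * y + c" for y
  define xi where "xi t = x t $ i" for t
  define T where "T = T_max A b ak bk i"
  have gpos: "ak $ i \<le> y \<Longrightarrow> y \<le> bk $ i \<Longrightarrow> g y > 0" for y
    using pos by (auto simp: g_def a_def c_def add.assoc)
  have lt: "ak $ i < bk $ i" using rect_nondeg by auto
  have g0: "g (ak $ i) > 0" and g1: "g (bk $ i) > 0" using gpos lt by auto
  have Tdef: "T = (ln (g (bk $ i)) - ln (g (ak $ i))) / a"
    unfolding T_def T_max_def g_def a_def c_def
    using g0 g1 by (simp add: ln_div g_def a_def c_def add.assoc)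
  have a0: "a \<noteq> 0" using Aii a_def by simp
  have T0: "T \<ge> 0"
  proof (cases "a > 0")
    case True
    then have "g (ak $ i) < g (bk $ i)" using lt by (simp add: g_def)
    then have "ln (g (ak $ i)) < ln (g (bk $ i))" using g0 by simp
    then show ?thesis using True Tdef by simp
  next
    case False
    then have "a < 0" using a0 by simp
    then have "g (ak $ i) > g (bk $ i)" using lt by (simp add: g_def)
    then have "ln (g (ak $ i)) > ln (g (bk $ i))" using g1 by simp
    then show ?thesis using \<open>a < 0\<close> Tdef by (simp add: divide_nonpos_neg)
  qed
  have dxi: "(xi has_real_derivative (A *v x t + b) $ i) (at t within {0..})" if "t \<ge> 0" for t
  proof -
    have "((\<lambda>s. x s $ i) has_vector_derivative (A *v x t + b) $ i) (at t within {0..})"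
      using bounded_linear.has_vector_derivative[OF bounded_linear_vec_nth, OF ode[rule_format, OF that]] .
    then show ?thesis unfolding xi_def has_real_derivative_iff_has_vector_derivative .
  qed
  have cont: "continuous_on {0..} xi"
    using dxi by (intro DERIV_continuous_on) auto
  have lower: "(A *v x t + b) $ i \<ge> g (xi t)" if "x t \<in> rect ak bk" for t
  proof -
    have "(A *v x t) $ i = (\<Sum>j\<in>UNIV. A $ i $ j * x t $ j)"
      by (simp add: matrix_vector_mult_def)
    also have "\<dots> = A $ i $ i * x t $ i + (\<Sum>j\<in>UNIV - {i}. A $ i $ j * x t $ j)"
      by (simp add: sum.remove)
    also have "\<dots> \<ge> A $ i $ i * x t $ i + C_star A ak bk i"
    proof -
      have "(\<Sum>j\<in>UNIV - {i}. Cterm (A $ i $ j) (ak $ j) (bk $ j)) \<le> (\<Sum>j\<in>UNIV - {i}. A $ i $ j * x t $ j)"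
      proof (rule sum_mono)
        fix j
        have "ak $ j \<le> x t $ j" "x t $ j \<le> bk $ j" using that by (auto simp: rect_def)
        then show "Cterm (A $ i $ j) (ak $ j) (bk $ j) \<le> A $ i $ j * x t $ j"
          unfolding Cterm_def by (auto intro: mult_left_mono mult_left_mono_neg)
      qed
      then show ?thesis unfolding C_star_def by simp
    qed
    finally show ?thesis by (simp add: g_def a_def c_def xi_def)
  qed
  show ?thesis
  proof (rule ccontr)
    assume nh: "\<not> ?thesis"
    have below: "xi t < bk $ i" if "0 \<le> t" "t \<le> T" for t
    proof (rule ccontr)
      assume "\<not> xi t < bk $ i"
      then have "xi 0 \<le> bk $ i" "bk $ i \<le> xi t" using init lt by (auto simp: xi_def)
      moreover have "continuous_on {0..t} xi" using cont by (rule continuous_on_subset) auto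
      ultimately obtain s where "0 \<le> s" "s \<le> t" "xi s = bk $ i"
        using IVT'[of xi 0 "bk $ i" t] \<open>0 \<le> t\<close> by blast
      then show False using nh that by (auto simp: xi_def T_def)
    qed
    have inr: "x t \<in> rect ak bk" if "0 \<le> t" "t \<le> T" for t
      using stay below that by (auto simp: xi_def)
    have xr: "ak $ i \<le> xi t \<and> xi t \<le> bk $ i" if "0 \<le> t" "t \<le> T" for t
      using inr[OF that] by (auto simp: rect_def xi_def)
    define H where "H t = ln (g (xi t)) / a - t" for t
    have "H 0 \<le> H T"
    proof (rule DERIV_nonneg_imp_increasing_open[OF T0])
      fix t assume t: "0 < t" "t < T"
      have gp: "g (xi t) > 0" using xr[of t] t gpos by auto
      have d: "(xi has_real_derivative (A *v x t + b) $ i) (at t)"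
        using dxi[of t] t at_within_interior[of t "{0..}"] by auto
      have "(H has_real_derivative ((a * ((A *v x t + b) $ i) / g (xi t)) / a - 1)) (at t)"
        unfolding H_def g_def using gp[unfolded g_def]
        by (auto intro!: derivative_eq_intros d)
      moreover have "(a * ((A *v x t + b) $ i) / g (xi t)) / a - 1 \<ge> 0"
      proof -
        have e: "(a * ((A *v x t + b) $ i) / g (xi t)) / a = ((A *v x t + b) $ i) / g (xi t)"
          using a0 by simp
        have "((A *v x t + b) $ i) / g (xi t) \<ge> 1"
          using lower[OF inr[of t]] t gp by simp
        then show ?thesis unfolding e by simp
      qed
      ultimately show "\<exists>y. (H has_real_derivative y) (at t) \<and> y \<ge> 0" by blast
    next
      have "continuous_on {0..T} xi" using cont by (rule continuous_on_subset) auto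
      moreover have "\<forall>t\<in>{0..T}. g (xi t) \<noteq> 0" using xr gpos by force
      ultimately show "continuous_on {0..T} H"
        unfolding H_def g_def using a0 by (auto intro!: continuous_intros)
    qed
    then have "ln (g (ak $ i)) / a \<le> ln (g (xi T)) / a - T"
      using init by (simp add: H_def xi_def)
    then have key: "ln (g (bk $ i)) / a \<le> ln (g (xi T)) / a"
      using Tdef by (simp add: diff_divide_distrib)
    have xT: "ak $ i \<le> xi T" "xi T < bk $ i" using xr[OF _ order.refl] below[OF T0 order.refl] T0 by auto
    have gT: "g (xi T) > 0" using xT gpos by auto
    show False
    proof (cases "a > 0")
      case True
      then have "g (xi T) < g (bk $ i)" using xT by (simp add: g_def)
      then have "ln (g (xi T)) < ln (g (bk $ i))" using gT by simp
      then show ?thesis using True key by (simp add: divide_le_cancel)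
    next
      case False
      then have "a < 0" using a0 by simp
      then have "g (xi T) > g (bk $ i)" using xT by (simp add: g_def)
      then have "ln (g (xi T)) > ln (g (bk $ i))" using g1 by simp
      then show ?thesis using \<open>a < 0\<close> key by (simp add: divide_le_cancel)
    qed
  qed
qed

end
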